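(* Let $x_1,\dots,x_n$ be i.i.d. uniform random variables on $[0,1]$. For any $\gamma,\gamma',\delta\in(0,1)$, with probability at least $1-\delta$, $$\mathsf{Q}^+_\gamma\Big(\frac1n\sum_{i=1}^n\delta_{x_i}\Big)-\gamma\le\min_{\varepsilon\in(0,1)}\Big\{(1-\varepsilon)^{-1}\Big[\varepsilon|\gamma-\gamma'|+\sqrt{\frac{2\gamma'(1-\gamma')\log(1/\delta)}{n}}+\Big(\frac23+\frac1{2\varepsilon}\Big)\frac{\log(1/\delta)}{n}\Big]\Big\}.$$ The same upper bound also holds for $\gamma-\mathsf{Q}^-_\gamma\big(\frac1n\sum_{i=1}^n\delta_{x_i}\big)$ with probability at least $1-\delta$.
   Context: For a probability distribution with CDF $F$ and $\gamma\in(0,1)$: $\mathsf{Q}^-_\gamma(F)=\inf\{x:F(x)\ge\gamma\}$ and $\mathsf{Q}^+_\gamma(F)=\inf\{x:F(x)>\gamma\}$. $\delta_x$ is the Dirac measure at $x$. *)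

theory Defs
  imports "HOL-Probability.Probability"
begin

definition Qminus :: "real \<Rightarrow> (real \<Rightarrow> real) \<Rightarrow> real" where
  "Qminus \<gamma> F = Inf {x. F x \<ge> \<gamma>}"

definition Qplus :: "real \<Rightarrow> (real \<Rightarrow> real) \<Rightarrow> real" where
  "Qplus \<gamma> F = Inf {x. F x > \<gamma>}"

text \<open>CDF of the empirical measure (1/n) sum_{i<n} delta_{x i}.\<close>
definition emp_cdf :: "nat \<Rightarrow> (nat \<Rightarrow> real) \<Rightarrow> real \<Rightarrow> real" where
  "emp_cdf n x t = real (card {i. i < n \<and> x i \<le> t}) / real n"

definition qbound :: "nat \<Rightarrow> real \<Rightarrow> real \<Rightarrow> real \<Rightarrow> real \<Rightarrow> real" where
  "qbound n \<gamma> \<gamma>' \<delta> \<epsilon> =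
     inverse (1 - \<epsilon>) * (\<epsilon> * \<bar>\<gamma> - \<gamma>'\<bar>
       + sqrt (2 * \<gamma>' * (1 - \<gamma>') * ln (1 / \<delta>) / real n)
       + (2/3 + 1 / (2 * \<epsilon>)) * ln (1 / \<delta>) / real n)"

definition unif_n :: "nat \<Rightarrow> (nat \<Rightarrow> real) measure" where
  "unif_n n = PiM {..<n} (\<lambda>_. uniform_measure lborel {0..1})"

end

theory Submission imports Defs begin

lemma fact_ge_pow3: "2 * 3 ^ n \<le> (fact (n + 2) :: real)"
proof (induction n)
  case 0 then show ?case by (simp add: numeral_2_eq_2)
next
  case (Suc n)
  have "fact (Suc n + 2) = real (n + 3) * fact (n + 2)"
    by (simp add: numeral_3_eq_3 numeral_2_eq_2 algebra_simps)
  also have "\<dots> \<ge> 3 * (2 * 3 ^ n)"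
    using Suc by (intro mult_mono) auto
  finally show ?case by simp
qed

lemma exp_bound3:
  fixes x :: real assumes "\<bar>x\<bar> < 3"
  shows "exp x \<le> 1 + x + x^2 / (2 * (1 - \<bar>x\<bar> / 3))"
proof -
  define r where "r = \<bar>x\<bar> / 3"
  have r: "0 \<le> r" "r < 1" using assms by (auto simp: r_def)
  have s1: "(\<lambda>n. x ^ (n + 2) / fact (n + 2)) sums (exp x - 1 - x)"
  proof -
    have "(\<lambda>n. x ^ n / fact n) sums exp x"
      using exp_converges[of x] by (simp add: divide_inverse_commute scaleR_conv_of_real)
    then have "(\<lambda>n. x ^ (n + 2) / fact (n + 2)) sums (exp x - sum (\<lambda>n. x ^ n / fact n) {..<2})"
      by (subst sums_iff_shift') 
    moreover have "exp x - sum (\<lambda>n. x ^ n / fact n) {..<2} = exp x - 1 - x"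
      by (simp add: numeral_2_eq_2)
    ultimately show ?thesis by metis
  qed
  have s2: "(\<lambda>n. x^2 / 2 * r ^ n) sums (x^2 / 2 * (1 / (1 - r)))"
    using geometric_sums[of r] r by (intro sums_mult) auto
  have le: "x ^ (n + 2) / fact (n + 2) \<le> x^2 / 2 * r ^ n" for n
  proof -
    have "x ^ (n + 2) / fact (n + 2) \<le> \<bar>x\<bar> ^ (n + 2) / fact (n + 2)"
    proof (rule divide_right_mono)
      show "x ^ (n + 2) \<le> \<bar>x\<bar> ^ (n + 2)"
        using abs_ge_self[of "x^(n+2)"] by (simp only: power_abs)
    qed simp
    also have "\<dots> \<le> \<bar>x\<bar> ^ (n + 2) / (2 * 3 ^ n)"
      by (intro divide_left_mono fact_ge_pow3) auto
    also have "\<dots> = x^2 / 2 * r ^ n"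
      by (simp add: r_def power_add power_divide power2_abs power2_eq_square)
    finally show ?thesis .
  qed
  have "exp x - 1 - x \<le> x^2 / 2 * (1 / (1 - r))"
    by (rule sums_le[OF le s1 s2])
  then show ?thesis using r by (simp add: r_def field_simps)
qed

lemma exp_bound_lin:
  fixes z l :: real assumes "\<bar>z\<bar> \<le> 1" "0 \<le> l" "l < 3"
  shows "exp (l * z) \<le> 1 + l * z + z^2 * (l^2 / (2 * (1 - l / 3)))"
proof -
  have az: "\<bar>l * z\<bar> \<le> l" using assms by (simp add: abs_mult mult_left_le)
  then have a3: "\<bar>l * z\<bar> < 3" using assms by simp
  have "exp (l * z) \<le> 1 + l * z + (l * z)^2 / (2 * (1 - \<bar>l * z\<bar> / 3))"
    by (rule exp_bound3[OF a3])
  also have "(l * z)^2 / (2 * (1 - \<bar>l * z\<bar> / 3)) \<le> (l * z)^2 / (2 * (1 - l / 3))"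
    using az assms by (intro divide_left_mono mult_pos_pos) auto
  also have "(l * z)^2 / (2 * (1 - l / 3)) = z^2 * (l^2 / (2 * (1 - l / 3)))"
    by (simp add: power_mult_distrib)
  finally show ?thesis by simp
qed

abbreviation U01 :: "real measure" where "U01 \<equiv> uniform_measure lborel {0..1}"

lemma coord_mgf:
  fixes p l sg :: real
  assumes p: "0 < p" "p < 1" and l: "0 \<le> l" "l < 3" and sg: "\<bar>sg\<bar> = 1"
  shows "(\<integral>\<^sup>+u. ennreal (exp (l * (sg * ((if u \<le> p then 1 else 0) - p)))) \<partial>U01)
           \<le> ennreal (exp (p * (1 - p) * (l^2 / (2 * (1 - l / 3)))))"
proof -
  define \<psi> where "\<psi> = l^2 / (2 * (1 - l / 3))"
  define c1 where "c1 = 1 + l * (sg * (1 - p)) + (1 - p)^2 * \<psi>"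
  define c2 where "c2 = 1 + l * (sg * (0 - p)) + p^2 * \<psi>"
  have sg2: "sg^2 = 1" using sg by (metis abs_of_nonneg abs_of_nonpos linorder_linear power2_abs power_one)
  have pw: "exp (l * (sg * ((if u \<le> p then 1 else 0) - p)))
        \<le> (if u \<le> p then c1 else c2)" for u
  proof -
    define z where "z = sg * ((if u \<le> p then 1 else 0) - p)"
    have "\<bar>z\<bar> \<le> 1" using p sg by (auto simp: z_def abs_mult)
    then have "exp (l * z) \<le> 1 + l * z + z^2 * \<psi>"
      unfolding \<psi>_def using l by (rule exp_bound_lin)
    also have "z^2 = ((if u \<le> p then 1 else 0) - p)^2"
      by (simp add: z_def power_mult_distrib sg2)
    finally show ?thesis by (auto simp: z_def c1_def c2_def)
  qed
  have c1: "c1 \<ge> 0" using order_less_le_trans[OF exp_gt_zero pw[of p]] by simp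
  have c2: "c2 \<ge> 0" using order_less_le_trans[OF exp_gt_zero pw[of 1]] p by simp
  have "(\<integral>\<^sup>+u. ennreal (exp (l * (sg * ((if u \<le> p then 1 else 0) - p)))) \<partial>U01)
     \<le> (\<integral>\<^sup>+u. ennreal c1 * indicator {..p} u + ennreal c2 * indicator {p<..} u \<partial>U01)"
  proof (intro nn_integral_mono)
    fix u
    show "ennreal (exp (l * (sg * ((if u \<le> p then 1 else 0) - p))))
       \<le> ennreal c1 * indicator {..p} u + ennreal c2 * indicator {p<..} u"
    proof (cases "u \<le> p")
      case True then show ?thesis using pw[of u] by (simp add: indicator_def ennreal_leI)
    next
      case False then show ?thesis using pw[of u] by (simp add: indicator_def ennreal_leI)
    qed
  qed
  also have "\<dots> = ennreal c1 * emeasure U01 {..p} + ennreal c2 * emeasure U01 {p<..}"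
    by (subst nn_integral_add) (auto simp: nn_integral_cmult_indicator)
  also have "emeasure U01 {..p} = ennreal p"
  proof -
    have "{0..1} \<inter> {..p} = {0..p}" using p by auto
    then show ?thesis using p by (simp del: Int_atLeastAtMost atMost_Int_atLeast Int_atLeastAtMostR2 Int_atLeastAtMostR1 add: emeasure_uniform_measure divide_ennreal_def)
  qed
  also have "emeasure U01 {p<..} = ennreal (1 - p)"
  proof -
    have "{0..1} \<inter> {p<..} = {p<..1}" using p by auto
    then show ?thesis using p by (simp add: emeasure_uniform_measure divide_ennreal_def)
  qed
  also have "ennreal c1 * ennreal p + ennreal c2 * ennreal (1 - p) = ennreal (c1 * p + c2 * (1 - p))"
    using c1 c2 p by (simp add: ennreal_mult ennreal_plus)
  also have "c1 * p + c2 * (1 - p) = 1 + p * (1 - p) * \<psi>"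
    by (simp add: c1_def c2_def power2_eq_square algebra_simps)
  also have "ennreal (1 + p * (1 - p) * \<psi>) \<le> ennreal (exp (p * (1 - p) * \<psi>))"
    by (intro ennreal_leI) (simp add: add.commute exp_ge_add_one_self)
  finally show ?thesis by (simp add: \<psi>_def)
qed

lemma prob_U01: "prob_space U01"
  by (intro prob_space_uniform_measure) auto

lemma prob_unif: "prob_space (unif_n n)"
  unfolding unif_n_def by (intro prob_space_PiM prob_U01)

lemma sets_ge: "f \<in> borel_measurable M \<Longrightarrow> {x\<in>space M. (c::real) \<le> f x} \<in> sets M"
  by measurable
lemma sets_gt: "f \<in> borel_measurable M \<Longrightarrow> {x\<in>space M. (c::real) < f x} \<in> sets M"
  by measurable
lemma sets_lt: "f \<in> borel_measurable M \<Longrightarrow> {x\<in>space M. f x < (c::real)} \<in> sets M"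
  by measurable

lemma meas_ind: assumes "i \<in> {..<n}"
  shows "(\<lambda>x. (if x i \<le> (p::real) then 1 else 0::real)) \<in> borel_measurable (unif_n n)"
  using assms unfolding unif_n_def by measurable

lemma meas_f:
  "(\<lambda>x. sg * (\<Sum>i<n. (if x i \<le> (p::real) then 1 else 0) - p)) \<in> borel_measurable (unif_n n)"
  by (intro borel_measurable_times borel_measurable_const borel_measurable_sum borel_measurable_diff meas_ind) auto

lemma bernstein_tail:
  fixes p t sg :: real
  assumes p: "0 < p" "p < 1" and t: "t > 0" and sg: "\<bar>sg\<bar> = 1"
  shows "measure (unif_n n) {x \<in> space (unif_n n).
            sg * (\<Sum>i<n. (if x i \<le> p then 1 else 0) - p) \<ge> real n * t}
         \<le> exp (- (real n * t^2) / (2 * (p * (1 - p) + t / 3)))"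
proof -
  define \<sigma> where "\<sigma> = p * (1 - p)"
  have \<sigma>: "\<sigma> > 0" using p by (simp add: \<sigma>_def)
  define l where "l = t / (\<sigma> + t / 3)"
  have l0: "l > 0" using \<sigma> t by (simp add: l_def)
  have l3: "l < 3" using \<sigma> t by (simp add: l_def field_simps)
  define \<psi> where "\<psi> = l^2 / (2 * (1 - l / 3))"
  define M where "M = unif_n n"
  interpret M: prob_space M unfolding M_def by (rule prob_unif)
  interpret P: product_sigma_finite "\<lambda>_. U01"
    unfolding product_sigma_finite_def
    using prob_U01 prob_space_imp_sigma_finite by blast
  define f where "f x = sg * (\<Sum>i<n. (if x i \<le> p then 1 else 0) - p)" for x :: "nat \<Rightarrow> real"
  have fm: "f \<in> borel_measurable M" unfolding f_def M_def by (rule meas_f)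
  have fm2: "(\<lambda>x. f x * indicator (space M) x) \<in> borel_measurable M"
    by (intro borel_measurable_times fm borel_measurable_indicator sets.top)
  have um: "(\<lambda>u. ennreal (exp (l * (sg * ((if u \<le> p then 1 else 0) - p))))) \<in> borel_measurable U01"
    by measurable
  have "emeasure M {x \<in> space M. f x \<ge> real n * t}
     \<le> ennreal (exp (- l * (real n * t))) * (\<integral>\<^sup>+x. ennreal (exp (l * f x)) * indicator (space M) x \<partial>M)"
    by (intro Chernoff_ineq_nn_integral_ge l0 fm2 sets.top)
  also have "(\<integral>\<^sup>+x. ennreal (exp (l * f x)) * indicator (space M) x \<partial>M)
      = (\<integral>\<^sup>+x. (\<Prod>i<n. ennreal (exp (l * (sg * ((if x i \<le> p then 1 else 0) - p))))) \<partial>M)"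
    by (intro nn_integral_cong)
       (simp add: f_def sum_distrib_left exp_sum prod_ennreal)
  also have "\<dots> = (\<Prod>i<n. (\<integral>\<^sup>+u. ennreal (exp (l * (sg * ((if u \<le> p then 1 else 0) - p)))) \<partial>U01))"
    unfolding M_def unif_n_def
    by (rule P.product_nn_integral_prod) (auto intro: um)
  also have "\<dots> \<le> (\<Prod>i<n. ennreal (exp (\<sigma> * \<psi>)))"
    by (intro prod_mono_ennreal) (use coord_mgf[OF p less_imp_le[OF l0] l3 sg] in \<open>simp add: \<sigma>_def \<psi>_def\<close>)
  also have "ennreal (exp (- l * (real n * t))) * (\<Prod>i<n. ennreal (exp (\<sigma> * \<psi>)))
      = ennreal (exp (- l * (real n * t) + real n * (\<sigma> * \<psi>)))"
  proof -
    have "ennreal (exp (- l * (real n * t))) * (\<Prod>i<n. ennreal (exp (\<sigma> * \<psi>)))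
       = ennreal (exp (- l * (real n * t)) * exp (\<sigma> * \<psi>) ^ n)"
      by (simp add: ennreal_power ennreal_mult)
    also have "exp (- l * (real n * t)) * exp (\<sigma> * \<psi>) ^ n = exp (- l * (real n * t) + real n * (\<sigma> * \<psi>))"
      by (simp only: exp_add exp_of_nat_mult mult.commute)
    finally show ?thesis .
  qed
  also have "- l * (real n * t) + real n * (\<sigma> * \<psi>) = - (real n * t^2) / (2 * (\<sigma> + t / 3))"
  proof -
    define D where "D = \<sigma> + t / 3"
    have D: "D > 0" using \<sigma> t by (simp add: D_def)
    have h1: "1 - l / 3 = \<sigma> / D" using D unfolding l_def D_def[symmetric] by (simp add: field_simps D_def)
    have "\<sigma> * \<psi> = \<sigma> * ((t / D)^2 / (2 * (\<sigma> / D)))"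
      unfolding \<psi>_def h1 by (simp add: l_def D_def)
    also have "\<dots> = t^2 / (2 * D)"
      using D \<sigma> by (simp add: field_simps power2_eq_square)
    finally have "\<sigma> * \<psi> = t^2 / (2 * D)" .
    then show ?thesis
      using D by (simp add: l_def D_def[symmetric] field_simps power2_eq_square)
  qed
  finally have "emeasure M {x \<in> space M. f x \<ge> real n * t}
      \<le> ennreal (exp (- (real n * t^2) / (2 * (\<sigma> + t / 3))))"
    by (simp add: mult_left_mono)
  then have "measure M {x \<in> space M. f x \<ge> real n * t}
      \<le> exp (- (real n * t^2) / (2 * (\<sigma> + t / 3)))"
    by (simp add: M.emeasure_eq_measure)
  then show ?thesis unfolding M_def f_def \<sigma>_def .
qed

lemma small_inv:
  fixes e :: real assumes "e > 0" shows "\<exists>k::nat. 1 / (real k + 1) < e"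
proof -
  obtain m :: nat where "m > 0" "inverse (real m) < e" using ex_inverse_of_nat_less[OF assms] by blast
  then show ?thesis by (intro exI[of _ "m - 1"]) (simp add: of_nat_diff inverse_eq_divide)
qed

lemma Inf_le_char:
  fixes F :: "real \<Rightarrow> real"
  assumes mono: "mono F" and ne: "\<exists>s. F s > g" and bdd: "bdd_below {s. F s > g}"
  shows "Inf {s. F s > g} \<le> c \<longleftrightarrow> (\<forall>k::nat. F (c + 1 / (real k + 1)) > g)"
proof
  assume h: "Inf {s. F s > g} \<le> c"
  show "\<forall>k::nat. F (c + 1 / (real k + 1)) > g"
  proof
    fix k :: nat
    have "Inf {s. F s > g} < c + 1 / (real k + 1)" using h
      by (smt (verit, best) divide_pos_pos of_nat_less_0_iff)
    then obtain s where s: "F s > g" "s < c + 1 / (real k + 1)"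
      using cInf_lessD[of "{s. F s > g}"] ne by auto
    then show "F (c + 1 / (real k + 1)) > g"
      using mono by (smt (verit) monoD)
  qed
next
  assume h: "\<forall>k::nat. F (c + 1 / (real k + 1)) > g"
  show "Inf {s. F s > g} \<le> c"
  proof (rule ccontr)
    assume "\<not> Inf {s. F s > g} \<le> c"
    then obtain k :: nat where k: "1 / (real k + 1) < Inf {s. F s > g} - c"
      using small_inv[of "Inf {s. F s > g} - c"] by auto
    have "Inf {s. F s > g} \<le> c + 1 / (real k + 1)"
      using h bdd by (intro cInf_lower) auto
    then show False using k by simp
  qed
qed

lemma Inf_ge_char:
  fixes F :: "real \<Rightarrow> real"
  assumes mono: "mono F" and ne: "\<exists>s. F s \<ge> g" and bdd: "bdd_below {s. F s \<ge> g}"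
  shows "Inf {s. F s \<ge> g} \<ge> c \<longleftrightarrow> (\<forall>k::nat. F (c - 1 / (real k + 1)) < g)"
proof
  assume h: "Inf {s. F s \<ge> g} \<ge> c"
  show "\<forall>k::nat. F (c - 1 / (real k + 1)) < g"
  proof (rule ccontr)
    assume "\<not> (\<forall>k::nat. F (c - 1 / (real k + 1)) < g)"
    then obtain k :: nat where "F (c - 1 / (real k + 1)) \<ge> g" using not_less by blast
    then have "Inf {s. F s \<ge> g} \<le> c - 1 / (real k + 1)"
      using bdd by (intro cInf_lower) auto
    moreover have "1 / (real k + 1) > 0" by simp
    ultimately show False using h by linarith
  qed
next
  assume h: "\<forall>k::nat. F (c - 1 / (real k + 1)) < g"
  show "Inf {s. F s \<ge> g} \<ge> c"
  proof (rule cInf_greatest)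
    show "{s. F s \<ge> g} \<noteq> {}" using ne by auto
  next
    fix s assume s: "s \<in> {s. F s \<ge> g}"
    show "c \<le> s"
    proof (rule ccontr)
      assume "\<not> c \<le> s"
      then obtain k :: nat where k: "1 / (real k + 1) < c - s"
        using small_inv[of "c - s"] by auto
      then have "s \<le> c - 1 / (real k + 1)" by simp
      then have "F s \<le> F (c - 1 / (real k + 1))" by (rule monoD[OF mono])
      moreover have "F (c - 1 / (real k + 1)) < g" using h by blast
      moreover have "g \<le> F s" using s by simp
      ultimately show False by simp
    qed
  qed
qed

lemma emp_cdf_sum:
  "emp_cdf n x s = (\<Sum>i<n. if x i \<le> s then 1 else 0) / real n"
proof -
  have "(\<Sum>i<n. if x i \<le> s then 1 else 0 :: real) = (\<Sum>i\<in>{i\<in>{..<n}. x i \<le> s}. 1)"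
    by (rule sum.inter_filter[symmetric]) simp
  also have "{i\<in>{..<n}. x i \<le> s} = {i. i < n \<and> x i \<le> s}" by auto
  also have "(\<Sum>i\<in>{i. i < n \<and> x i \<le> s}. 1) = real (card {i. i < n \<and> x i \<le> s})" by simp
  finally show ?thesis by (simp add: emp_cdf_def)
qed

lemma emp_cdf_mono: "mono (emp_cdf n x)"
  unfolding emp_cdf_def
  by (intro monoI divide_right_mono of_nat_mono card_mono) auto

lemma emp_cdf_top:
  assumes "n \<ge> 1" shows "emp_cdf n x (Max (x ` {..<n})) = 1"
proof -
  have "{i. i < n \<and> x i \<le> Max (x ` {..<n})} = {..<n}" by auto
  then show ?thesis using assms by (simp add: emp_cdf_def)
qed

lemma emp_cdf_bot:
  assumes "s < Min (x ` {..<n})" "n \<ge> 1" shows "emp_cdf n x s = 0"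
proof -
  have "{i. i < n \<and> x i \<le> s} = {}"
  proof (safe)
    fix i assume "i < n" "x i \<le> s"
    then have "Min (x ` {..<n}) \<le> x i" by (intro Min_le) auto
    then show "i \<in> {}" using assms \<open>x i \<le> s\<close> by simp
  qed
  then show ?thesis by (simp add: emp_cdf_def)
qed

lemma Qplus_char:
  assumes "n \<ge> 1" "0 < g" "g < 1"
  shows "Qplus g (emp_cdf n x) \<le> c \<longleftrightarrow> (\<forall>k::nat. emp_cdf n x (c + 1 / (real k + 1)) > g)"
  unfolding Qplus_def
proof (rule Inf_le_char[OF emp_cdf_mono])
  show "\<exists>s. emp_cdf n x s > g" using emp_cdf_top[OF assms(1)] assms by metis
  show "bdd_below {s. emp_cdf n x s > g}"
  proof (rule bdd_belowI)
    fix s assume "s \<in> {s. emp_cdf n x s > g}"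
    then show "Min (x ` {..<n}) \<le> s" using emp_cdf_bot[of s x n] assms by force
  qed
qed

lemma Qminus_char:
  assumes "n \<ge> 1" "0 < g" "g < 1"
  shows "Qminus g (emp_cdf n x) \<ge> c \<longleftrightarrow> (\<forall>k::nat. emp_cdf n x (c - 1 / (real k + 1)) < g)"
  unfolding Qminus_def
proof (rule Inf_ge_char[OF emp_cdf_mono])
  show "\<exists>s. emp_cdf n x s \<ge> g" using emp_cdf_top[OF assms(1)] assms by (metis less_imp_le)
  show "bdd_below {s. emp_cdf n x s \<ge> g}"
  proof (rule bdd_belowI)
    fix s assume "s \<in> {s. emp_cdf n x s \<ge> g}"
    then show "Min (x ` {..<n}) \<le> s" using emp_cdf_bot[of s x n] assms by force
  qed
qed

lemma emp_cdf_meas: "(\<lambda>x. emp_cdf n x s) \<in> borel_measurable (unif_n n)"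
  unfolding emp_cdf_sum
  by (intro borel_measurable_divide borel_measurable_const borel_measurable_sum meas_ind) auto

lemma key_alg:
  fixes N L v a e t :: real
  assumes N: "N > 0" and L: "L > 0" and v: "v \<ge> 0" and a: "a \<ge> 0" and e: "0 < e" "e < 1"
    and h: "inverse (1 - e) * (e * a + sqrt (2 * v * L / N) + (2/3 + 1 / (2 * e)) * L / N) \<le> t"
  shows "N * t^2 \<ge> 2 * L * (v + a + 4 * t / 3)"
proof -
  define S where "S = sqrt (2 * v * L / N)"
  define B where "B = 2 * L / (3 * N)"
  define C where "C = L / (2 * e * N)"
  have S0: "S \<ge> 0" using v L N by (simp add: S_def)
  have B0: "B > 0" using L N by (simp add: B_def)
  have C0: "C > 0" using L N e by (simp add: C_def)
  have split: "(2/3 + 1 / (2 * e)) * L / N = B + C"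
    using N e by (simp add: B_def C_def field_simps)
  have h1: "e * a + S + B + C \<le> (1 - e) * t"
  proof -
    have "e * a + S + B + C = (1 - e) * (inverse (1 - e) * (e * a + S + (B + C)))"
      using e by (simp add: field_simps)
    also have "\<dots> \<le> (1 - e) * t"
      using h e by (intro mult_left_mono) (auto simp: S_def split)
    finally show ?thesis .
  qed
  have t0: "t \<ge> 0"
  proof -
    have "0 < e * a + S + B + C" using e a S0 B0 C0 by (smt (verit) mult_nonneg_nonneg)
    then have "0 < (1 - e) * t" using h1 by linarith
    then show ?thesis using e by (simp add: zero_less_mult_iff)
  qed
  define A where "A = sqrt (2 * L * (v + a + t) / N)"
  have A0: "A \<ge> 0" using L N v a t0 by (simp add: A_def)
  have A2: "A^2 = 2 * L * (v + a + t) / N" using L N v a t0 by (simp add: A_def)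
  have "A \<le> S + sqrt (2 * L * (a + t) / N)"
  proof -
    have "2 * L * (v + a + t) / N = 2 * v * L / N + 2 * L * (a + t) / N"
      using N by (simp add: field_simps)
    then show ?thesis unfolding A_def S_def
      using L N v a t0 by (metis sqrt_add_le_add_sqrt divide_nonneg_pos mult_nonneg_nonneg add_nonneg_nonneg
          less_imp_le zero_le_numeral)
  qed
  also have "sqrt (2 * L * (a + t) / N) \<le> e * (a + t) + C"
  proof (rule real_le_lsqrt)
    show "0 \<le> e * (a + t) + C" using e a t0 C0 by simp
    have "(e * (a + t) + C)^2 - 2 * L * (a + t) / N = (e * (a + t) - C)^2"
    proof -
      have "4 * (e * (a + t)) * C = 2 * L * (a + t) / N"
        using e N by (simp add: C_def field_simps)
      then show ?thesis by (simp add: power2_eq_square algebra_simps)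
    qed
    then show "2 * L * (a + t) / N \<le> (e * (a + t) + C)^2"
      by (smt (verit) zero_le_power2)
  qed
  finally have AB: "A + B \<le> t" using h1 by (simp add: algebra_simps)
  have "t^2 \<ge> A^2 + B * t"
  proof -
    have "t^2 = t * t" by (simp add: power2_eq_square)
    also have "t * t \<ge> t * (A + B)" using AB t0 by (intro mult_left_mono) auto
    finally have "t^2 \<ge> t * A + B * t" by (simp add: algebra_simps)
    moreover have "t * A \<ge> A * A" using AB A0 B0 by (intro mult_right_mono) auto
    ultimately show ?thesis by (simp add: power2_eq_square)
  qed
  then have "N * t^2 \<ge> N * (A^2 + B * t)" using N by simp
  also have "N * (A^2 + B * t) = 2 * L * (v + a + 4 * t / 3)"
    using N unfolding A2 B_def by (simp add: field_simps)
  finally show ?thesis .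
qed

lemma INF_cond:
  fixes n :: nat and g g' d :: real
  assumes n: "n \<ge> 1" and d: "0 < d" "d < 1" and g': "0 < g'" "g' < 1"
  defines "T \<equiv> (INF e\<in>{0<..<1}. qbound n g g' d e)"
  shows "T \<ge> 0" "real n * T^2 \<ge> 2 * ln (1 / d) * (g' * (1 - g') + \<bar>g - g'\<bar> + 4 * T / 3)"
proof -
  define L where "L = ln (1 / d)"
  have L: "L > 0" using d by (simp add: L_def ln_div)
  have nonneg: "qbound n g g' d e \<ge> 0" if "e \<in> {0<..<1}" for e
    using that L n g' unfolding qbound_def L_def[symmetric]
    by (intro mult_nonneg_nonneg add_nonneg_nonneg divide_nonneg_pos) (auto simp: divide_nonneg_pos)
  have bdd: "bdd_below ((\<lambda>e. qbound n g g' d e) ` {0<..<1})"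
    using nonneg by (intro bdd_belowI2) auto
  have ne: "{0<..<(1::real)} \<noteq> {}" by auto
  show T0: "T \<ge> 0" unfolding T_def using nonneg ne by (intro cINF_greatest) auto
  define f where "f s = real n * s^2 - 2 * L * (g' * (1 - g') + \<bar>g - g'\<bar> + 4 * s / 3)" for s
  have ev: "eventually (\<lambda>s. 0 \<le> f s) (at_right T)"
  proof -
    have "0 \<le> f s" if "s > T" for s
    proof -
      obtain e where e: "e \<in> {0<..<1}" "qbound n g g' d e < s"
        using \<open>s > T\<close> unfolding T_def cINF_less_iff[OF ne bdd] by blast
      have "real n * s^2 \<ge> 2 * L * (g' * (1 - g') + \<bar>g - g'\<bar> + 4 * s / 3)"
      proof (rule key_alg)
        show "inverse (1 - e) * (e * \<bar>g - g'\<bar> + sqrt (2 * (g' * (1 - g')) * L / real n)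
            + (2 / 3 + 1 / (2 * e)) * L / real n) \<le> s"
          using e(2) unfolding qbound_def L_def by (simp add: mult.assoc)
      qed (use n L g' e in auto)
      then show ?thesis by (simp add: f_def)
    qed
    then show ?thesis using eventually_at_right_less[of T] by (auto elim: eventually_mono)
  qed
  have lim: "(f \<longlongrightarrow> f T) (at_right T)"
    unfolding f_def by (intro tendsto_intros) auto
  have "0 \<le> f T"
    by (rule tendsto_lowerbound[OF lim ev]) simp
  then show "real n * T^2 \<ge> 2 * ln (1 / d) * (g' * (1 - g') + \<bar>g - g'\<bar> + 4 * T / 3)"
    by (simp add: f_def L_def)
qed

lemma emp_cdf_D:
  assumes "n \<ge> 1"
  shows "emp_cdf n x s = (\<Sum>i<n. (if x i \<le> s then 1 else 0) - s) / real n + s"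
  using assms by (simp add: emp_cdf_sum sum_subtractf field_simps)


lemma G0_meas: "{x \<in> space (unif_n n). \<forall>i<n. x i \<in> {0..1}} \<in> sets (unif_n n)"
proof -
  have "{x \<in> space (unif_n n). \<forall>i\<in>{..<n}. x i \<in> {0..1}} \<in> sets (unif_n n)"
  proof (rule sets.sets_Collect_finite_All)
    fix i assume i: "i \<in> {..<n}"
    show "{x \<in> space (unif_n n). x i \<in> {0..1}} \<in> sets (unif_n n)"
      using i unfolding unif_n_def by measurable
  qed simp
  then show ?thesis by (simp only: lessThan_iff Ball_def)
qed

lemma G0_prob: "measure (unif_n n) {x \<in> space (unif_n n). \<forall>i<n. x i \<in> {0..1}} = 1"
proof -
  interpret prob_space "unif_n n" by (rule prob_unif)
  have "AE x in unif_n n. \<forall>i\<in>{..<n}. x i \<in> {0..1}"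
  proof (rule eventually_ball_finite)
    show "\<forall>i\<in>{..<n}. AE x in unif_n n. x i \<in> {0..1}"
    proof
      fix i assume i: "i \<in> {..<n}"
      have "AE u in U01. u \<in> {0..1}"
        by (rule AE_uniform_measureI) auto
      then show "AE x in unif_n n. x i \<in> {0..1}"
        unfolding unif_n_def using i by (intro AE_PiM_component prob_U01) auto
    qed
  qed simp
  then have "AE x in unif_n n. \<forall>i<n. x i \<in> {0..1}" by (simp only: lessThan_iff Ball_def)
  then show ?thesis using prob_Collect_eq_1[OF G0_meas] by blast
qed

lemma emp_cdf_all:
  assumes "n \<ge> 1" "\<forall>i<n. x i \<le> s" shows "emp_cdf n x s = 1"
proof -
  have "{i. i < n \<and> x i \<le> s} = {..<n}" using assms by auto
  then show ?thesis using assms by (simp add: emp_cdf_def)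
qed

lemma emp_cdf_none:
  assumes "\<forall>i<n. x i > s" shows "emp_cdf n x s = 0"
proof -
  have "{i. i < n \<and> x i \<le> s} = {}" using assms by force
  then show ?thesis by (simp add: emp_cdf_def)
qed

theorem lemma3:
  fixes n :: nat and \<gamma> \<gamma>' \<delta> :: real
  assumes "n \<ge> 1"
    and "0 < \<gamma>" "\<gamma> < 1" and "0 < \<gamma>'" "\<gamma>' < 1" and "0 < \<delta>" "\<delta> < 1"
  shows "measure (unif_n n)
           {x \<in> space (unif_n n).
              Qplus \<gamma> (emp_cdf n x) - \<gamma> \<le> (INF \<epsilon>\<in>{0<..<1}. qbound n \<gamma> \<gamma>' \<delta> \<epsilon>)}
           \<ge> 1 - \<delta>
         \<and> measure (unif_n n)
           {x \<in> space (unif_n n).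
              \<gamma> - Qminus \<gamma> (emp_cdf n x) \<le> (INF \<epsilon>\<in>{0<..<1}. qbound n \<gamma> \<gamma>' \<delta> \<epsilon>)}
           \<ge> 1 - \<delta>"
proof -
  note n = assms(1) and g = assms(2,3) and g' = assms(4,5) and d = assms(6,7)
  define T where "T = (INF \<epsilon>\<in>{0<..<1}. qbound n \<gamma> \<gamma>' \<delta> \<epsilon>)"
  define L where "L = ln (1 / \<delta>)"
  have L: "L > 0" using d by (simp add: L_def ln_div)
  have dL: "exp (- L) = \<delta>" using d by (simp add: L_def ln_div)
  define v where "v = \<gamma>' * (1 - \<gamma>')"
  define a where "a = \<bar>\<gamma> - \<gamma>'\<bar>"
  have v: "v > 0" using g' by (simp add: v_def)
  have T0: "T \<ge> 0" and C: "real n * T^2 \<ge> 2 * L * (v + a + 4 * T / 3)"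
    using INF_cond[OF n d g', of \<gamma>] unfolding T_def[symmetric] L_def v_def a_def by auto
  have Tpos: "T > 0"
  proof (rule ccontr)
    assume "\<not> T > 0"
    then have "T = 0" using T0 by simp
    then show False using C L v by (simp add: a_def) (smt (verit) mult_pos_pos)
  qed
  have key: "exp (- (real n * T^2) / (2 * (p * (1 - p) + T / 3))) \<le> \<delta>"
    if p: "0 < p" "p < 1" "\<bar>p - \<gamma>\<bar> = T" for p
  proof -
    have "p * (1 - p) - v = (p - \<gamma>') * (1 - p - \<gamma>')" by (simp add: v_def algebra_simps)
    also have "\<dots> \<le> \<bar>p - \<gamma>'\<bar>"
    proof -
      have "\<bar>(p - \<gamma>') * (1 - p - \<gamma>')\<bar> = \<bar>p - \<gamma>'\<bar> * \<bar>1 - p - \<gamma>'\<bar>" by (simp add: abs_mult)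
      also have "\<dots> \<le> \<bar>p - \<gamma>'\<bar> * 1" using p g' by (intro mult_left_mono) auto
      finally show ?thesis by simp
    qed
    also have "\<dots> \<le> T + a" using p by (simp add: a_def)
    finally have sig: "p * (1 - p) \<le> v + a + T" by simp
    have "p * (1 - p) > 0" using p by (intro mult_pos_pos) auto
    then have pos: "p * (1 - p) + T / 3 > 0" using Tpos by linarith
    have "2 * L * (p * (1 - p) + T / 3) \<le> 2 * L * (v + a + 4 * T / 3)"
      using sig L by (intro mult_left_mono) auto
    also have "\<dots> \<le> real n * T^2" by (rule C)
    finally have "L \<le> real n * T^2 / (2 * (p * (1 - p) + T / 3))"
      using pos by (simp add: field_simps)
    then have "exp (- (real n * T^2) / (2 * (p * (1 - p) + T / 3))) \<le> exp (- L)" by simp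
    then show ?thesis using dL by simp
  qed
  define M where "M = unif_n n"
  interpret M: prob_space M unfolding M_def by (rule prob_unif)
  define G0 where "G0 = {x \<in> space M. \<forall>i<n. x i \<in> {0..1}}"
  have G0m: "G0 \<in> sets M" unfolding G0_def M_def by (rule G0_meas)
  have G0p: "measure M G0 = 1" unfolding G0_def M_def by (rule G0_prob)
  have P1: "measure M {x \<in> space M. Qplus \<gamma> (emp_cdf n x) - \<gamma> \<le> T} \<ge> 1 - \<delta>"
  proof -
    have eq: "{x \<in> space M. Qplus \<gamma> (emp_cdf n x) - \<gamma> \<le> T}
       = {x \<in> space M. \<forall>k::nat. emp_cdf n x (\<gamma> + T + 1 / (real k + 1)) > \<gamma>}"
    proof -
      have "Qplus \<gamma> (emp_cdf n x) - \<gamma> \<le> T \<longleftrightarrow> Qplus \<gamma> (emp_cdf n x) \<le> \<gamma> + T" for x by linarith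
      then show ?thesis using Qplus_char[OF n g] by auto
    qed
    have meas: "{x \<in> space M. \<forall>k::nat. emp_cdf n x (\<gamma> + T + 1 / (real k + 1)) > \<gamma>} \<in> sets M"
      by (intro sets.sets_Collect_countable_All sets_gt) (simp add: M_def emp_cdf_meas)
    show ?thesis
    proof (cases "\<gamma> + T < 1")
      case True
      define p where "p = \<gamma> + T"
      have p: "0 < p" "p < 1" "\<bar>p - \<gamma>\<bar> = T" using True g Tpos by (auto simp: p_def)
      define B where "B = {x \<in> space M. (-1) * (\<Sum>i<n. (if x i \<le> p then 1 else 0) - p) \<ge> real n * T}"
      have Bm: "B \<in> sets M" unfolding B_def M_def by (intro sets_ge meas_f)
      have B: "measure M B \<le> \<delta>"
        using bernstein_tail[OF p(1,2) Tpos, of "-1" n] key[OF p] unfolding B_def M_def by simp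
      have sub: "space M - B \<subseteq> {x \<in> space M. \<forall>k::nat. emp_cdf n x (\<gamma> + T + 1 / (real k + 1)) > \<gamma>}"
      proof safe
        fix x k assume x: "x \<in> space M" "x \<notin> B"
        then have "(\<Sum>i<n. (if x i \<le> p then 1 else 0) - p) > - (real n * T)"
          by (auto simp: B_def)
        then have "(\<Sum>i<n. (if x i \<le> p then 1 else 0) - p) / real n > - T"
          using n by (simp add: field_simps)
        then have "emp_cdf n x p > \<gamma>" using n by (simp add: emp_cdf_D p_def)
        moreover have "emp_cdf n x p \<le> emp_cdf n x (\<gamma> + T + 1 / (real k + 1))"
          by (intro monoD[OF emp_cdf_mono]) (simp add: p_def)
        ultimately show "emp_cdf n x (\<gamma> + T + 1 / (real k + 1)) > \<gamma>" by simp
      qed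
      have "1 - \<delta> \<le> 1 - measure M B" using B by simp
      also have "\<dots> = measure M (space M - B)" using Bm by (simp add: M.prob_compl)
      also have "\<dots> \<le> measure M {x \<in> space M. \<forall>k::nat. emp_cdf n x (\<gamma> + T + 1 / (real k + 1)) > \<gamma>}"
        by (rule M.finite_measure_mono[OF sub meas])
      finally show ?thesis unfolding eq .
    next
      case False
      have sub: "G0 \<subseteq> {x \<in> space M. \<forall>k::nat. emp_cdf n x (\<gamma> + T + 1 / (real k + 1)) > \<gamma>}"
      proof safe
        fix x k assume x: "x \<in> G0"
        have "\<forall>i<n. x i \<le> \<gamma> + T + 1 / (real k + 1)"
        proof safe
          fix i assume "i < n"
          then have "x i \<le> 1" using x by (auto simp: G0_def)
          moreover have "(0::real) < 1 / (real k + 1)" by simp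
          ultimately show "x i \<le> \<gamma> + T + 1 / (real k + 1)" using False by linarith
        qed
        then show "emp_cdf n x (\<gamma> + T + 1 / (real k + 1)) > \<gamma>"
          using emp_cdf_all[OF n] g by simp
      qed (auto simp: G0_def)
      have "1 - \<delta> \<le> measure M G0" using G0p d by simp
      also have "\<dots> \<le> measure M {x \<in> space M. \<forall>k::nat. emp_cdf n x (\<gamma> + T + 1 / (real k + 1)) > \<gamma>}"
        by (rule M.finite_measure_mono[OF sub meas])
      finally show ?thesis unfolding eq .
    qed
  qed
  have P2: "measure M {x \<in> space M. \<gamma> - Qminus \<gamma> (emp_cdf n x) \<le> T} \<ge> 1 - \<delta>"
  proof -
    have eq: "{x \<in> space M. \<gamma> - Qminus \<gamma> (emp_cdf n x) \<le> T}
       = {x \<in> space M. \<forall>k::nat. emp_cdf n x (\<gamma> - T - 1 / (real k + 1)) < \<gamma>}"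
    proof -
      have "\<gamma> - Qminus \<gamma> (emp_cdf n x) \<le> T \<longleftrightarrow> Qminus \<gamma> (emp_cdf n x) \<ge> \<gamma> - T" for x by linarith
      then show ?thesis using Qminus_char[OF n g] by auto
    qed
    have meas: "{x \<in> space M. \<forall>k::nat. emp_cdf n x (\<gamma> - T - 1 / (real k + 1)) < \<gamma>} \<in> sets M"
      by (intro sets.sets_Collect_countable_All sets_lt) (simp add: M_def emp_cdf_meas)
    show ?thesis
    proof (cases "\<gamma> - T > 0")
      case True
      define p where "p = \<gamma> - T"
      have p: "0 < p" "p < 1" "\<bar>p - \<gamma>\<bar> = T" using True g Tpos by (auto simp: p_def)
      define B where "B = {x \<in> space M. 1 * (\<Sum>i<n. (if x i \<le> p then 1 else 0) - p) \<ge> real n * T}"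
      have Bm: "B \<in> sets M" unfolding B_def M_def by (intro sets_ge meas_f)
      have B: "measure M B \<le> \<delta>"
        using bernstein_tail[OF p(1,2) Tpos, of "1" n] key[OF p] unfolding B_def M_def by simp
      have sub: "space M - B \<subseteq> {x \<in> space M. \<forall>k::nat. emp_cdf n x (\<gamma> - T - 1 / (real k + 1)) < \<gamma>}"
      proof safe
        fix x k assume x: "x \<in> space M" "x \<notin> B"
        then have "(\<Sum>i<n. (if x i \<le> p then 1 else 0) - p) < real n * T"
          by (auto simp: B_def)
        then have "(\<Sum>i<n. (if x i \<le> p then 1 else 0) - p) / real n < T"
          using n by (simp add: field_simps)
        then have "emp_cdf n x p < \<gamma>" using n by (simp add: emp_cdf_D p_def)
        moreover have "emp_cdf n x (\<gamma> - T - 1 / (real k + 1)) \<le> emp_cdf n x p"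
          by (intro monoD[OF emp_cdf_mono]) (simp add: p_def)
        ultimately show "emp_cdf n x (\<gamma> - T - 1 / (real k + 1)) < \<gamma>" by simp
      qed
      have "1 - \<delta> \<le> 1 - measure M B" using B by simp
      also have "\<dots> = measure M (space M - B)" using Bm by (simp add: M.prob_compl)
      also have "\<dots> \<le> measure M {x \<in> space M. \<forall>k::nat. emp_cdf n x (\<gamma> - T - 1 / (real k + 1)) < \<gamma>}"
        by (rule M.finite_measure_mono[OF sub meas])
      finally show ?thesis unfolding eq .
    next
      case False
      have sub: "G0 \<subseteq> {x \<in> space M. \<forall>k::nat. emp_cdf n x (\<gamma> - T - 1 / (real k + 1)) < \<gamma>}"
      proof safe
        fix x k assume x: "x \<in> G0"
        have "\<forall>i<n. x i > \<gamma> - T - 1 / (real k + 1)"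
        proof safe
          fix i assume "i < n"
          then have "x i \<ge> 0" using x by (auto simp: G0_def)
          moreover have "(0::real) < 1 / (real k + 1)" by simp
          ultimately show "x i > \<gamma> - T - 1 / (real k + 1)" using False by linarith
        qed
        then show "emp_cdf n x (\<gamma> - T - 1 / (real k + 1)) < \<gamma>"
          using emp_cdf_none g by simp
      qed (auto simp: G0_def)
      have "1 - \<delta> \<le> measure M G0" using G0p d by simp
      also have "\<dots> \<le> measure M {x \<in> space M. \<forall>k::nat. emp_cdf n x (\<gamma> - T - 1 / (real k + 1)) < \<gamma>}"
        by (rule M.finite_measure_mono[OF sub meas])
      finally show ?thesis unfolding eq .
    qed
  qed
  show ?thesis using P1 P2 unfolding M_def T_def by simp
qed

end
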